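(* In the algebra $\mathcal{A}$ described in the context, let \[\tilde A^{\mathrm{bi}}_{s;mn}(W)=\{(E_n-s^2Q_n^2)(Q_m^2E_m-1)-(E_m-s^2Q_m^2)(Q_n^2E_n-1)\}Q_mQ_n\] and \[A^{\mathrm{bi};2}_{s;mn}(W)=\{u_1(s,E_n,Q_n)(E_n-s^2Q_n^2)v_1(s,E_m,Q_m)(Q_m^2E_m-1)-u_1(s,E_m,Q_m)(E_m-s^2Q_m^2)v_1(s,E_n,Q_n)(Q_n^2E_n-1)\}Q_mQ_n.\] Then $\tilde A^{\mathrm{bi}}_{s;mn}(W)$ is a right divisor of $A^{\mathrm{bi};2}_{s;mn}(W)$, i.e. $A^{\mathrm{bi};2}_{s;mn}(W)=C\,\tilde A^{\mathrm{bi}}_{s;mn}(W)$ for some $C\in\mathcal{A}$.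
   Context: $s$ is an indeterminate. $\mathcal{A}$ is the algebra of noncommutative polynomials in $E_m,E_n$ with coefficients in $\mathbb{Q}(s,Q_m,Q_n)$ written on the left, subject to $E_mE_n=E_nE_m$, $E_m\,p(s,Q_m,Q_n)=p(s,sQ_m,Q_n)E_m$, $E_n\,p(s,Q_m,Q_n)=p(s,Q_m,sQ_n)E_n$ for rational functions $p$. For $(E,Q)\in\{(E_m,Q_m),(E_n,Q_n)\}$ put $\Phi_k(Q)=1-s^kQ^4$ and $u_1(s,E,Q)=\frac{1}{\Phi_6(Q)}E-\frac{s^2Q^2}{\Phi_2(Q)}$, $v_1(s,E,Q)=\frac{s^2Q^2}{\Phi_6(Q)}E-\frac{1}{\Phi_2(Q)}$. *)

theory Defs
  imports Complex_Main "HOL-Library.Poly_Mapping" "HOL-Computational_Algebra.Fraction_Field"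
begin

text \<open>Multivariate polynomials over the rationals: monomials are exponent vectors
  (variable index to exponent).  Variable 0 is s, variable 1 is Q_m, variable 2 is Q_n.\<close>

type_synonym mpoly = "(nat \<Rightarrow>\<^sub>0 nat) \<Rightarrow>\<^sub>0 rat"

type_synonym rfun = "mpoly fract"

definition mvar :: "nat \<Rightarrow> mpoly" where
  "mvar i = Poly_Mapping.single (Poly_Mapping.single i 1) 1"

definition rvar :: "nat \<Rightarrow> rfun" where
  "rvar i = Fract (mvar i) 1"

abbreviation s_var :: rfun where "s_var \<equiv> rvar 0"
abbreviation Qm_var :: rfun where "Qm_var \<equiv> rvar 1"
abbreviation Qn_var :: rfun where "Qn_var \<equiv> rvar 2"

text \<open>Substitution of variable k by s * (variable k) on polynomials
  (the monomial s^a0 ... x_k^ak ... goes to s^(a0+ak) ... x_k^ak ...).\<close>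
definition mono_shift :: "nat \<Rightarrow> (nat \<Rightarrow>\<^sub>0 nat) \<Rightarrow> (nat \<Rightarrow>\<^sub>0 nat)" where
  "mono_shift k a = a + Poly_Mapping.single 0 (Poly_Mapping.lookup a k)"

definition msub :: "nat \<Rightarrow> mpoly \<Rightarrow> mpoly" where
  "msub k p = (\<Sum>a\<in>Poly_Mapping.keys p. Poly_Mapping.single (mono_shift k a) (Poly_Mapping.lookup p a))"

definition rsub :: "nat \<Rightarrow> rfun \<Rightarrow> rfun" where
  "rsub k x = (THE y. \<forall>p q. q \<noteq> 0 \<longrightarrow> x = Fract p q \<longrightarrow> y = Fract (msub k p) (msub k q))"

abbreviation sigma_m :: "rfun \<Rightarrow> rfun" where "sigma_m \<equiv> rsub 1"
abbreviation sigma_n :: "rfun \<Rightarrow> rfun" where "sigma_n \<equiv> rsub 2"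

text \<open>An element of A is represented by its coefficient function: f i j is the (left)
  coefficient of E_m^i E_n^j.  Genuine elements of A are those with finite support.\<close>

type_synonym alg = "nat \<Rightarrow> nat \<Rightarrow> rfun"

definition alg_fin :: "alg \<Rightarrow> bool" where
  "alg_fin f \<longleftrightarrow> finite {(i, j). f i j \<noteq> 0}"

definition aconst :: "rfun \<Rightarrow> alg" where
  "aconst c = (\<lambda>i j. if i = 0 \<and> j = 0 then c else 0)"

definition aEm :: alg where
  "aEm = (\<lambda>i j. if i = 1 \<and> j = 0 then 1 else 0)"

definition aEn :: alg where
  "aEn = (\<lambda>i j. if i = 0 \<and> j = 1 then 1 else 0)"

definition aadd :: "alg \<Rightarrow> alg \<Rightarrow> alg" (infixl "\<oplus>" 65) where
  "f \<oplus> g = (\<lambda>i j. f i j + g i j)"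

definition adiff :: "alg \<Rightarrow> alg \<Rightarrow> alg" (infixl "\<ominus>" 65) where
  "f \<ominus> g = (\<lambda>i j. f i j - g i j)"

text \<open>(c E_m^a E_n^b)(d E_m^c E_n^d) = c sigma_m^a sigma_n^b(d) E_m^(a+c) E_n^(b+d).\<close>
definition amul :: "alg \<Rightarrow> alg \<Rightarrow> alg" (infixl "\<odot>" 70) where
  "f \<odot> g = (\<lambda>i j. \<Sum>a\<le>i. \<Sum>b\<le>j. f a b * (sigma_m ^^ a) ((sigma_n ^^ b) (g (i - a) (j - b))))"

definition Phi :: "nat \<Rightarrow> rfun \<Rightarrow> rfun" where
  "Phi k Q = 1 - s_var ^ k * Q ^ 4"

definition u1 :: "alg \<Rightarrow> rfun \<Rightarrow> alg" where
  "u1 E Q = aconst (1 / Phi 6 Q) \<odot> E \<ominus> aconst (s_var ^ 2 * Q ^ 2 / Phi 2 Q)"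

definition v1 :: "alg \<Rightarrow> rfun \<Rightarrow> alg" where
  "v1 E Q = aconst (s_var ^ 2 * Q ^ 2 / Phi 6 Q) \<odot> E \<ominus> aconst (1 / Phi 2 Q)"

definition A_tilde_bi :: alg where
  "A_tilde_bi =
     ((aEn \<ominus> aconst (s_var ^ 2 * Qn_var ^ 2)) \<odot> (aconst (Qm_var ^ 2) \<odot> aEm \<ominus> aconst 1)
      \<ominus> (aEm \<ominus> aconst (s_var ^ 2 * Qm_var ^ 2)) \<odot> (aconst (Qn_var ^ 2) \<odot> aEn \<ominus> aconst 1))
     \<odot> aconst (Qm_var * Qn_var)"

definition A_bi2 :: alg where
  "A_bi2 =
     (u1 aEn Qn_var \<odot> (aEn \<ominus> aconst (s_var ^ 2 * Qn_var ^ 2)) \<odot> v1 aEm Qm_var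
        \<odot> (aconst (Qm_var ^ 2) \<odot> aEm \<ominus> aconst 1)
      \<ominus> u1 aEm Qm_var \<odot> (aEm \<ominus> aconst (s_var ^ 2 * Qm_var ^ 2)) \<odot> v1 aEn Qn_var
        \<odot> (aconst (Qn_var ^ 2) \<odot> aEn \<ominus> aconst 1))
     \<odot> aconst (Qm_var * Qn_var)"

end

theory Submission
  imports Defs
begin


lemma ms_add: "mono_shift k (a + b) = mono_shift k a + mono_shift k b"
  unfolding mono_shift_def by (simp add: lookup_add single_add algebra_simps)

lemma ms_zero[simp]: "mono_shift k 0 = 0"
  unfolding mono_shift_def by simp

lemma ms_inj: "k \<noteq> 0 \<Longrightarrow> inj (mono_shift k)"
proof (rule injI)
  fix a b assume k: "k \<noteq> 0" and e: "mono_shift k a = mono_shift k b"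
  have "Poly_Mapping.lookup (mono_shift k a) k = Poly_Mapping.lookup a k" "Poly_Mapping.lookup (mono_shift k b) k = Poly_Mapping.lookup b k"
    using k by (simp_all add: mono_shift_def lookup_add lookup_single)
  with e have "Poly_Mapping.lookup a k = Poly_Mapping.lookup b k" by simp
  with e show "a = b" unfolding mono_shift_def by simp
qed

lemma msub_gen:
  assumes "finite A" "Poly_Mapping.keys p \<subseteq> A"
  shows "msub k p = (\<Sum>a\<in>A. Poly_Mapping.single (mono_shift k a) (Poly_Mapping.lookup p a))"
  unfolding msub_def
proof (rule sum.mono_neutral_left[OF assms(1) assms(2)])
  show "\<forall>i\<in>A - Poly_Mapping.keys p. Poly_Mapping.single (mono_shift k i) (Poly_Mapping.lookup p i) = 0"
    by (simp add: in_keys_iff)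
qed

lemma msub_add: "msub k (p + q) = msub k p + msub k q"
proof -
  let ?A = "Poly_Mapping.keys p \<union> Poly_Mapping.keys q"
  have "Poly_Mapping.keys (p+q) \<subseteq> ?A" by (rule keys_add)
  then have "msub k (p+q) = (\<Sum>a\<in>?A. Poly_Mapping.single (mono_shift k a) (Poly_Mapping.lookup (p+q) a))"
    by (intro msub_gen) auto
  also have "\<dots> = (\<Sum>a\<in>?A. Poly_Mapping.single (mono_shift k a) (Poly_Mapping.lookup p a))
     + (\<Sum>a\<in>?A. Poly_Mapping.single (mono_shift k a) (Poly_Mapping.lookup q a))"
    by (simp add: lookup_add single_add sum.distrib)
  also have "\<dots> = msub k p + msub k q"
    by (subst (1 2) msub_gen[of ?A]) auto
  finally show ?thesis .
qed

lemma msub_zero[simp]: "msub k 0 = 0" by (simp add: msub_def)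

lemma msub_single: "msub k (Poly_Mapping.single a c) = Poly_Mapping.single (mono_shift k a) c"
  by (subst msub_gen[of "{a}"]) auto

lemma msub_sum: "finite A \<Longrightarrow> msub k (\<Sum>x\<in>A. f x) = (\<Sum>x\<in>A. msub k (f x))"
  by (induction A rule: finite_induct) (simp_all add: msub_add)

lemma pm_expand: "(p::mpoly) = (\<Sum>a\<in>Poly_Mapping.keys p. Poly_Mapping.single a (Poly_Mapping.lookup p a))"
proof (rule poly_mapping_eqI)
  fix k
  have "Poly_Mapping.lookup (\<Sum>a\<in>Poly_Mapping.keys p. Poly_Mapping.single a (Poly_Mapping.lookup p a)) k
     = (\<Sum>a\<in>Poly_Mapping.keys p. Poly_Mapping.lookup p a when a = k)"
    by (simp add: Poly_Mapping.lookup_sum lookup_single)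
  also have "\<dots> = Poly_Mapping.lookup p k"
    by (simp add: when_def in_keys_iff)
  finally show "Poly_Mapping.lookup p k = Poly_Mapping.lookup (\<Sum>a\<in>Poly_Mapping.keys p. Poly_Mapping.single a (Poly_Mapping.lookup p a)) k" by simp
qed

lemma msub_mult: "msub k (p * q) = msub k p * msub k q"
proof -
  have "p * q = (\<Sum>a\<in>Poly_Mapping.keys p. Poly_Mapping.single a (Poly_Mapping.lookup p a)) * (\<Sum>b\<in>Poly_Mapping.keys q. Poly_Mapping.single b (Poly_Mapping.lookup q b))"
    using pm_expand[of p] pm_expand[of q] by simp
  also have "\<dots> = (\<Sum>a\<in>Poly_Mapping.keys p. \<Sum>b\<in>Poly_Mapping.keys q. Poly_Mapping.single (a+b) (Poly_Mapping.lookup p a * Poly_Mapping.lookup q b))"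
    by (simp add: sum_product mult_single)
  finally have pq: "p * q = \<dots>" .
  have "msub k (p*q) = (\<Sum>a\<in>Poly_Mapping.keys p. \<Sum>b\<in>Poly_Mapping.keys q. Poly_Mapping.single (mono_shift k a + mono_shift k b) (Poly_Mapping.lookup p a * Poly_Mapping.lookup q b))"
    unfolding pq by (simp add: msub_sum msub_single ms_add)
  also have "\<dots> = (\<Sum>a\<in>Poly_Mapping.keys p. Poly_Mapping.single (mono_shift k a) (Poly_Mapping.lookup p a)) * (\<Sum>b\<in>Poly_Mapping.keys q. Poly_Mapping.single (mono_shift k b) (Poly_Mapping.lookup q b))"
    by (simp add: sum_product mult_single)
  also have "\<dots> = msub k p * msub k q" by (simp add: msub_def)
  finally show ?thesis .
qed

lemma msub_one[simp]: "msub k 1 = 1"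
  using msub_single[of k 0 1] by simp

lemma msub_uminus: "msub k (- p) = - msub k p"
  using msub_add[of k p "-p"] by (simp add: eq_neg_iff_add_eq_0 add.commute)

lemma msub_diff: "msub k (p - q) = msub k p - msub k q"
  using msub_add[of k p "-q"] msub_uminus[of k q] by simp

lemma lookup_msub: "k \<noteq> 0 \<Longrightarrow> Poly_Mapping.lookup (msub k p) (mono_shift k a) = Poly_Mapping.lookup p a"
proof -
  assume k: "k \<noteq> 0"
  have "Poly_Mapping.lookup (msub k p) (mono_shift k a) = (\<Sum>b\<in>Poly_Mapping.keys p. Poly_Mapping.lookup p b when mono_shift k b = mono_shift k a)"
    by (simp add: msub_def lookup_sum lookup_single)
  also have "\<dots> = (\<Sum>b\<in>Poly_Mapping.keys p. Poly_Mapping.lookup p b when b = a)"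
    using ms_inj[OF k] by (simp add: inj_eq)
  also have "\<dots> = Poly_Mapping.lookup p a"
    by (simp add: when_def in_keys_iff)
  finally show ?thesis .
qed

lemma msub_nz: "k \<noteq> 0 \<Longrightarrow> p \<noteq> 0 \<Longrightarrow> msub k p \<noteq> 0"
proof -
  assume k: "k \<noteq> 0" and p: "p \<noteq> 0"
  then obtain a where "Poly_Mapping.lookup p a \<noteq> 0" by (metis poly_mapping_eqI lookup_zero)
  then show ?thesis using lookup_msub[OF k, of p a] by auto
qed




lemma rsub_Fract:
  assumes k: "k \<noteq> 0" and q: "q \<noteq> 0"
  shows "rsub k (Fract p q) = Fract (msub k p) (msub k q)"
  unfolding rsub_def
proof (rule the_equality)
  show "\<forall>p' q'. q' \<noteq> 0 \<longrightarrow> Fract p q = Fract p' q' \<longrightarrow> Fract (msub k p) (msub k q) = Fract (msub k p') (msub k q')"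
  proof (intro allI impI)
    fix p' q' assume q': "q' \<noteq> 0" and e: "Fract p q = Fract p' q'"
    then have "p * q' = p' * q" using q by (simp add: eq_fract)
    then have "msub k p * msub k q' = msub k p' * msub k q" by (metis msub_mult)
    then show "Fract (msub k p) (msub k q) = Fract (msub k p') (msub k q')"
      using msub_nz[OF k q] msub_nz[OF k q'] by (simp add: eq_fract)
  qed
next
  fix y assume "\<forall>p' q'. q' \<noteq> 0 \<longrightarrow> Fract p q = Fract p' q' \<longrightarrow> y = Fract (msub k p') (msub k q')"
  then show "y = Fract (msub k p) (msub k q)" using q by blast
qed

context fixes k :: nat assumes k: "k \<noteq> 0"
begin

lemma rsub_add: "rsub k (x + y) = rsub k x + rsub k y"
proof (cases x; cases y)
  fix a b c d assume "x = Fract a b" "b \<noteq> 0" "y = Fract c d" "d \<noteq> 0"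
  then show ?thesis using k msub_nz[OF k]
    by (simp add: rsub_Fract msub_add msub_mult)
qed

lemma rsub_mult: "rsub k (x * y) = rsub k x * rsub k y"
proof (cases x; cases y)
  fix a b c d assume "x = Fract a b" "b \<noteq> 0" "y = Fract c d" "d \<noteq> 0"
  then show ?thesis using k msub_nz[OF k]
    by (simp add: rsub_Fract msub_add msub_mult)
qed

lemma rsub_diff: "rsub k (x - y) = rsub k x - rsub k y"
proof (cases x; cases y)
  fix a b c d assume "x = Fract a b" "b \<noteq> 0" "y = Fract c d" "d \<noteq> 0"
  then show ?thesis using k msub_nz[OF k]
    by (simp add: rsub_Fract msub_diff msub_mult)
qed

lemma rsub_one: "rsub k 1 = 1"
  using k by (simp add: One_fract_def rsub_Fract)

lemma rsub_zero: "rsub k 0 = 0"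
  using k by (simp add: Zero_fract_def rsub_Fract)

lemma rsub_inverse: "rsub k (inverse x) = inverse (rsub k x)"
proof (cases x)
  fix a b assume x: "x = Fract a b" "b \<noteq> 0"
  show ?thesis
  proof (cases "a = 0")
    case True then show ?thesis using x by (simp add: rsub_zero fract_collapse)
  next
    case False then show ?thesis using x k msub_nz[OF k] by (simp add: rsub_Fract)
  qed
qed

lemma rsub_divide: "rsub k (x / y) = rsub k x / rsub k y"
  by (simp add: divide_inverse rsub_mult rsub_inverse)

lemma rsub_power: "rsub k (x ^ n) = rsub k x ^ n"
  by (induction n) (simp_all add: rsub_one rsub_mult)

lemma rsubn_add: "(rsub k ^^ n) (x + y) = (rsub k ^^ n) x + (rsub k ^^ n) y"
  by (induction n) (simp_all add: rsub_add)
lemma rsubn_diff: "(rsub k ^^ n) (x - y) = (rsub k ^^ n) x - (rsub k ^^ n) y"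
  by (induction n) (simp_all add: rsub_diff)
lemma rsubn_zero: "(rsub k ^^ n) 0 = 0"
  by (induction n) (simp_all add: rsub_zero)
lemma rsubn_one: "(rsub k ^^ n) 1 = 1"
  by (induction n) (simp_all add: rsub_one)

end

lemma msub_mvar: "msub k (mvar i) = (if i = k then mvar 0 * mvar i else mvar i)"
  by (simp add: mvar_def msub_single mono_shift_def mult_single lookup_single add.commute)

lemma rsub_rvar: "k \<noteq> 0 \<Longrightarrow> rsub k (rvar i) = (if i = k then rvar 0 * rvar i else rvar i)"
  by (simp add: rvar_def rsub_Fract msub_mvar)




definition amono :: "nat \<Rightarrow> nat \<Rightarrow> rfun \<Rightarrow> alg" where
  "amono a b c = (\<lambda>i j. if i = a \<and> j = b then c else 0)"

lemma aconst_mono: "aconst c = amono 0 0 c" by (simp add: aconst_def amono_def)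
lemma aEm_mono: "aEm = amono 1 0 1" by (simp add: aEm_def amono_def)
lemma aEn_mono: "aEn = amono 0 1 1" by (simp add: aEn_def amono_def)

lemma dsum_delta: "(\<Sum>x\<le>(i::nat). \<Sum>y\<le>(j::nat). if x = a \<and> y = b then K else 0) = (if a \<le> i \<and> b \<le> j then K else (0::rfun))"
proof -
  have "(\<Sum>x\<le>i. \<Sum>y\<le>j. if x = a \<and> y = b then K else 0) = (\<Sum>x\<le>i. if x = a then (\<Sum>y\<le>j. if y = b then K else 0) else 0)"
    by (intro sum.cong refl) auto
  also have "\<dots> = (if a \<le> i \<and> b \<le> j then K else 0)"
    by (simp add: sum.delta)
  finally show ?thesis .
qed

lemma mono_mult: "amono a b c \<odot> amono a' b' d = amono (a+a') (b+b') (c * (sigma_m ^^ a) ((sigma_n ^^ b) d))"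
proof (rule ext, rule ext)
  fix i j
  have "(amono a b c \<odot> amono a' b' d) i j =
    (\<Sum>x\<le>i. \<Sum>y\<le>j. if x = a \<and> y = b then (if i - a = a' \<and> j - b = b' then c * (sigma_m ^^ a) ((sigma_n ^^ b) d) else 0) else 0)"
    unfolding amul_def amono_def
    by (intro sum.cong refl) (auto simp: rsubn_zero)
  also have "\<dots> = amono (a+a') (b+b') (c * (sigma_m ^^ a) ((sigma_n ^^ b) d)) i j"
    unfolding amono_def dsum_delta by auto
  finally show "(amono a b c \<odot> amono a' b' d) i j = amono (a+a') (b+b') (c * (sigma_m ^^ a) ((sigma_n ^^ b) d)) i j" .
qed

lemma adiff_amul: "(f \<ominus> g) \<odot> h = f \<odot> h \<ominus> g \<odot> h"
  unfolding amul_def adiff_def by (simp add: algebra_simps sum_subtractf)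

lemma aadd_amul: "(f \<oplus> g) \<odot> h = f \<odot> h \<oplus> g \<odot> h"
  unfolding amul_def aadd_def by (simp add: algebra_simps sum.distrib)

lemma amul_adiff: "f \<odot> (g \<ominus> h) = f \<odot> g \<ominus> f \<odot> h"
  unfolding amul_def adiff_def by (simp add: algebra_simps sum_subtractf rsubn_diff)

lemma amul_aadd: "f \<odot> (g \<oplus> h) = f \<odot> g \<oplus> f \<odot> h"
  unfolding amul_def aadd_def by (simp add: algebra_simps sum.distrib rsubn_add)

lemma alg_fin_mono: "alg_fin (amono a b c)"
  unfolding alg_fin_def amono_def
  by (rule finite_subset[of _ "{(a,b)}"]) auto

lemma alg_fin_aadd: "alg_fin f \<Longrightarrow> alg_fin g \<Longrightarrow> alg_fin (f \<oplus> g)"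
  unfolding alg_fin_def aadd_def
  by (rule finite_subset[of _ "{(i, j). f i j \<noteq> 0} \<union> {(i, j). g i j \<noteq> 0}"]) auto

lemma alg_fin_adiff: "alg_fin f \<Longrightarrow> alg_fin g \<Longrightarrow> alg_fin (f \<ominus> g)"
  unfolding alg_fin_def adiff_def
  by (rule finite_subset[of _ "{(i, j). f i j \<noteq> 0} \<union> {(i, j). g i j \<noteq> 0}"]) auto

lemma single_pow: "Poly_Mapping.single a (1::rat) ^ n = Poly_Mapping.single (\<Sum>j<n. a) 1"
  by (induction n) (simp_all add: mult_single add.commute)

lemma Fract_pow: "Fract (a::mpoly) 1 ^ n = Fract (a ^ n) 1"
  by (induction n) (simp_all add: One_fract_def)

lemma Phi_nz: assumes i: "i \<noteq> 0" shows "Phi k (rvar i) \<noteq> 0"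
proof -
  let ?m = "(\<Sum>j<k. Poly_Mapping.single (0::nat) (1::nat)) + (\<Sum>j<(4::nat). Poly_Mapping.single i 1)"
  have "Phi k (rvar i) = Fract (1 - Poly_Mapping.single ?m 1) 1"
    by (simp add: Phi_def rvar_def mvar_def Fract_pow single_pow One_fract_def mult_single)
  moreover have "?m \<noteq> 0"
  proof
    assume "?m = 0"
    then have "Poly_Mapping.lookup ?m i = 0" by simp
    moreover have "Poly_Mapping.lookup ?m i = 4" using i
      by (simp only: lookup_add Poly_Mapping.lookup_sum) (simp add: lookup_single)
    ultimately show False by simp
  qed
  then have "Poly_Mapping.lookup (1 - Poly_Mapping.single ?m (1::rat)) 0 = 1"
    by (simp add: lookup_minus lookup_single)
  then have "1 - Poly_Mapping.single ?m (1::rat) \<noteq> 0" by auto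
  ultimately show ?thesis by (simp add: eq_fract Zero_fract_def)
qed

lemma rsub_Phi: "k \<noteq> 0 \<Longrightarrow> rsub k (Phi a (rvar i)) = (if i = k then Phi (a+4) (rvar i) else Phi a (rvar i))"
  by (simp add: Phi_def rsub_diff rsub_one rsub_mult rsub_power rsub_rvar power_add power_mult_distrib)




lemma funpow_small: "(f ^^ 0) x = x" "(f ^^ 1) x = f x" "(f ^^ 2) x = f (f x)" "(f ^^ 3) x = f (f (f x))" "(f ^^ 4) x = f (f (f (f x)))"
  by (simp_all add: numeral_eq_Suc)

lemmas rs1 = rsub_add[of 1] rsub_diff[of 1] rsub_mult[of 1] rsub_divide[of 1] rsub_power[of 1] rsub_one[of 1] rsub_zero[of 1] rsub_rvar[of 1] rsub_Phi[of 1]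
lemmas rs2 = rsub_add[of 2] rsub_diff[of 2] rsub_mult[of 2] rsub_divide[of 2] rsub_power[of 2] rsub_one[of 2] rsub_zero[of 2] rsub_rvar[of 2] rsub_Phi[of 2]

lemmas rs1' = rsub_add[of "Suc 0"] rsub_diff[of "Suc 0"] rsub_mult[of "Suc 0"] rsub_divide[of "Suc 0"] rsub_power[of "Suc 0"] rsub_one[of "Suc 0"] rsub_zero[of "Suc 0"] rsub_rvar[of "Suc 0"] rsub_Phi[of "Suc 0"]
lemmas rs2' = rsub_add[of "Suc (Suc 0)"] rsub_diff[of "Suc (Suc 0)"] rsub_mult[of "Suc (Suc 0)"] rsub_divide[of "Suc (Suc 0)"] rsub_power[of "Suc (Suc 0)"] rsub_one[of "Suc (Suc 0)"] rsub_zero[of "Suc (Suc 0)"] rsub_rvar[of "Suc (Suc 0)"] rsub_Phi[of "Suc (Suc 0)"]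
lemmas norm = rs1' rs2'  aconst_mono aEm_mono aEn_mono adiff_amul amul_adiff aadd_amul amul_aadd mono_mult funpow_small rs1 rs2

lemma Phi_nz1: "Phi k (rvar (Suc 0)) \<noteq> 0" by (rule Phi_nz) simp
lemma Phi_nz2: "Phi k (rvar (Suc (Suc 0))) \<noteq> 0" by (rule Phi_nz) simp
lemma Phi_nz2': "Phi k (rvar 2) \<noteq> 0" by (rule Phi_nz) simp

lemma ext9:
  fixes f g :: alg
  assumes "\<And>i j. 2 < i \<or> 2 < j \<Longrightarrow> f i j = g i j"
    "f 0 0 = g 0 0" "f 0 1 = g 0 1" "f 0 2 = g 0 2"
    "f 1 0 = g 1 0" "f 1 1 = g 1 1" "f 1 2 = g 1 2"
    "f 2 0 = g 2 0" "f 2 1 = g 2 1" "f 2 2 = g 2 2"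
  shows "f = g"
proof (rule ext, rule ext)
  fix i j
  show "f i j = g i j"
  proof (cases "2 < i \<or> 2 < j")
    case True then show ?thesis using assms(1) by blast
  next
    case False
    then have "i \<in> {0,1,2}" "j \<in> {0,1,2}" by auto
    then show ?thesis using assms(2-10) by auto
  qed
qed

definition Cm :: alg where
  "Cm = u1 aEn Qn_var \<odot> v1 aEm Qm_var \<oplus> u1 aEm Qm_var \<odot> v1 aEn Qn_var"

lemma main_eq: "A_bi2 = Cm \<odot> A_tilde_bi"
  apply (simp add: A_bi2_def A_tilde_bi_def Cm_def u1_def v1_def norm)
  apply (rule ext9)
  apply (simp add: adiff_def aadd_def amono_def)
  apply (erule disjE)
  apply simp
  apply simp
  apply (simp_all add: adiff_def aadd_def amono_def)
  apply (simp_all add: field_simps Phi_nz1 Phi_nz2 Phi_nz2')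
  apply (simp_all only: Phi_def)
  apply algebra+
  done


lemma alg_fin_Cm: "alg_fin Cm"
  by (simp add: Cm_def u1_def v1_def norm alg_fin_mono alg_fin_aadd alg_fin_adiff)

theorem lemma4p4:
  shows "\<exists>C. alg_fin C \<and> A_bi2 = C \<odot> A_tilde_bi"
  using alg_fin_Cm main_eq by blast

end
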